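(* Let $k$, $a$, $b$, $\ell$ be positive integers with $k = a\ell$ and $a \le b$. Let $P = b\ast[0,\ell-1] = \{0,b,2b,\ldots,(\ell-1)b\}$ and \[ A = P + [0,a-1] = \bigcup_{j=1}^{\ell}\big((j-1)b + [0,a-1]\big). \] Then $|A| = k$. Moreover, for every positive integer $h$, letting $Q = b\ast[0,h(\ell-1)] = \{0,b,2b,\ldots,h(\ell-1)b\}$, we have \[ hA = Q + [0,h(a-1)] \] and \[ |hA| = \begin{cases} (a + b(\ell-1) - 1)h + 1 & \text{if } a \le b \le (a-1)h+1, \\ (a-1)(\ell-1)h^2 + (a+\ell-2)h + 1 & \text{if } b \ge h(a-1)+1. \end{cases} \]
   Context: For real numbers $u,v$, the integer interval $[u,v]$ denotes $\{n \in \mathbf{Z} : u \le n \le v\}$. For a set $X$ of integers and an integer $\lambda$, $\lambda\ast X = \{\lambda x : x \in X\}$; for sets $X,Y$, $X+Y = \{x+y : x\in X, y \in Y\}$. For a positive integer $h$ and a finite set $A$ of integers, the $h$-fold sumset $hA$ is the set of all sums $a_1+\cdots+a_h$ with $a_1,\ldots,a_h \in A$ (not necessarily distinct). *)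

theory Defs
  imports Main
begin

definition dil :: "int \<Rightarrow> int set \<Rightarrow> int set" where
  "dil c X = {c * x | x. x \<in> X}"

definition sumset :: "int set \<Rightarrow> int set \<Rightarrow> int set" where
  "sumset X Y = {x + y | x y. x \<in> X \<and> y \<in> Y}"

definition hfold :: "nat \<Rightarrow> int set \<Rightarrow> int set" where
  "hfold h A = {s. \<exists>f. (\<forall>i<h. f i \<in> A) \<and> s = (\<Sum>i<h. f i)}"

end

theory Submission
  imports Defs
begin

lemma sumset_dil_eq: "sumset (dil b X) Y = (\<lambda>(j,t). b*j+t) ` (X \<times> Y)"
  unfolding sumset_def dil_def by force

lemma divmod_aux:
  fixes b j t :: int
  assumes "0 \<le> t" "t < b"
  shows "(b*j+t) div b = j" "(b*j+t) mod b = t"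
  using assms by (simp_all add: add.commute)

lemma card_S:
  fixes b M N :: int
  assumes "N < b" "0 \<le> N" "0 \<le> M"
  shows "int (card (sumset (dil b {0..M}) {0..N})) = (M+1)*(N+1)"
proof -
  have inj: "inj_on (\<lambda>(j,t). b*j+t) ({0..M} \<times> {0..N})"
  proof (rule inj_onI)
    fix p q
    assume h0: "p \<in> {0..M} \<times> {0..N}" "q \<in> {0..M} \<times> {0..N}"
      "(\<lambda>(j,t). b*j+t) p = (\<lambda>(j,t). b*j+t) q"
    obtain j t where p: "p = (j,t)" by (cases p)
    obtain j' t' where q: "q = (j',t')" by (cases q)
    have h: "(j,t) \<in> {0..M} \<times> {0..N}" "(j',t') \<in> {0..M} \<times> {0..N}" "b*j+t = b*j'+t'"
      using h0 p q by auto
    have "(b*j+t) div b = j" "(b*j+t) mod b = t" using h(1) assms by (intro divmod_aux; auto)+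
    moreover have "(b*j'+t') div b = j'" "(b*j'+t') mod b = t'" using h(2) assms by (intro divmod_aux; auto)+
    ultimately show "p = q" using h(3) p q by metis
  qed
  show ?thesis unfolding sumset_dil_eq
    using assms by (simp add: card_image[OF inj] card_cartesian_product)
qed

lemma decomp:
  fixes c x :: int
  assumes "0 \<le> c" "0 \<le> x" "x \<le> int h * c"
  shows "\<exists>f. (\<forall>i<h. f i \<in> {0..c}) \<and> x = (\<Sum>i<h. f i)"
  using assms(2,3)
proof (induction h arbitrary: x)
  case 0
  then show ?case by simp
next
  case (Suc h)
  have "0 \<le> x - min x c" "x - min x c \<le> int h * c" using Suc.prems assms(1) by (auto simp: algebra_simps min_def)
  then obtain f where f: "\<forall>i<h. f i \<in> {0..c}" "x - min x c = (\<Sum>i<h. f i)" using Suc.IH by blast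
  define g where "g = f(h := min x c)"
  have "\<forall>i<Suc h. g i \<in> {0..c}" using f(1) Suc.prems assms(1) by (auto simp: g_def less_Suc_eq)
  moreover have "x = (\<Sum>i<Suc h. g i)" using f(2) by (simp add: g_def)
  ultimately show ?case by blast
qed

lemma hfold_eq:
  fixes b M N :: int
  assumes "0 \<le> M" "0 \<le> N"
  shows "hfold h (sumset (dil b {0..M}) {0..N}) = sumset (dil b {0..int h*M}) {0..int h*N}"
proof
  show "hfold h (sumset (dil b {0..M}) {0..N}) \<subseteq> sumset (dil b {0..int h*M}) {0..int h*N}"
  proof
    fix x assume "x \<in> hfold h (sumset (dil b {0..M}) {0..N})"
    then obtain f where f: "\<forall>i<h. f i \<in> sumset (dil b {0..M}) {0..N}" "x = (\<Sum>i<h. f i)"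
      unfolding hfold_def by blast
    have "\<forall>i<h. \<exists>p. p \<in> {0..M} \<times> {0..N} \<and> f i = (\<lambda>(j,t). b*j+t) p"
      using f(1) unfolding sumset_dil_eq image_iff by blast
    then obtain p where p: "\<forall>i<h. p i \<in> {0..M} \<times> {0..N} \<and> f i = (\<lambda>(j,t). b*j+t) (p i)"
      by metis
    define j where "j = (\<lambda>i. fst (p i))"
    define t where "t = (\<lambda>i. snd (p i))"
    have jt: "\<forall>i<h. j i \<in> {0..M} \<and> t i \<in> {0..N} \<and> f i = b*j i+t i"
      using p unfolding j_def t_def by (auto simp: case_prod_beta mem_Times_iff)
    have "x = (\<Sum>i<h. b*j i+t i)"
      unfolding f(2) using jt by (intro sum.cong) auto
    also have "\<dots> = b * (\<Sum>i<h. j i) + (\<Sum>i<h. t i)"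
      by (simp only: sum.distrib sum_distrib_left)
    finally have xe: "x = b * (\<Sum>i<h. j i) + (\<Sum>i<h. t i)" .
    have "(\<Sum>i<h. j i) \<in> {0..int h*M}"
    proof -
      have "(\<Sum>i<h. j i) \<le> (\<Sum>i<h. M)" using jt by (intro sum_mono) auto
      moreover have "0 \<le> (\<Sum>i<h. j i)" using jt by (intro sum_nonneg) auto
      ultimately show ?thesis by simp
    qed
    moreover have "(\<Sum>i<h. t i) \<in> {0..int h*N}"
    proof -
      have "(\<Sum>i<h. t i) \<le> (\<Sum>i<h. N)" using jt by (intro sum_mono) auto
      moreover have "0 \<le> (\<Sum>i<h. t i)" using jt by (intro sum_nonneg) auto
      ultimately show ?thesis by simp
    qed
    then have "((\<Sum>i<h. j i), (\<Sum>i<h. t i)) \<in> {0..int h*M} \<times> {0..int h*N}"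
      using \<open>(\<Sum>i<h. j i) \<in> {0..int h*M}\<close> by blast
    then show "x \<in> sumset (dil b {0..int h*M}) {0..int h*N}"
      unfolding sumset_dil_eq xe by (rule rev_image_eqI) simp
  qed
next
  show "sumset (dil b {0..int h*M}) {0..int h*N} \<subseteq> hfold h (sumset (dil b {0..M}) {0..N})"
  proof
    fix x assume "x \<in> sumset (dil b {0..int h*M}) {0..int h*N}"
    then obtain q where q: "q \<in> {0..int h*M} \<times> {0..int h*N}" "x = (\<lambda>(j,t). b*j+t) q"
      unfolding sumset_dil_eq by blast
    obtain J T where "q = (J,T)" by (cases q)
    then have JT: "J \<in> {0..int h*M}" "T \<in> {0..int h*N}" "x = b*J+T" using q by auto
    obtain g where g: "\<forall>i<h. g i \<in> {0..M}" "J = (\<Sum>i<h. g i)"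
      using decomp[of M J h] JT(1) assms(1) by (simp only: atLeastAtMost_iff) blast
    obtain g' where g': "\<forall>i<h. g' i \<in> {0..N}" "T = (\<Sum>i<h. g' i)"
      using decomp[of N T h] JT(2) assms(2) by (simp only: atLeastAtMost_iff) blast
    have "\<forall>i<h. b * g i + g' i \<in> sumset (dil b {0..M}) {0..N}"
    proof (intro allI impI)
      fix i assume "i < h"
      then have "(g i, g' i) \<in> {0..M} \<times> {0..N}" using g(1) g'(1) by blast
      then show "b * g i + g' i \<in> sumset (dil b {0..M}) {0..N}"
        unfolding sumset_dil_eq by (rule rev_image_eqI) simp
    qed
    moreover have "x = (\<Sum>i<h. b * g i + g' i)"
      unfolding JT(3) g(2) g'(2) by (simp only: sum.distrib sum_distrib_left)
    ultimately show "x \<in> hfold h (sumset (dil b {0..M}) {0..N})"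
      unfolding hfold_def mem_Collect_eq by (intro exI[of _ "\<lambda>i. b * g i + g' i"]) (intro conjI)
  qed
qed

lemma interval_case:
  fixes b M N :: int
  assumes "0 \<le> M" "0 \<le> N" "0 < b" "b \<le> N + 1"
  shows "sumset (dil b {0..M}) {0..N} = {0..b*M+N}"
proof
  show "sumset (dil b {0..M}) {0..N} \<subseteq> {0..b*M+N}"
  proof
    fix x assume "x \<in> sumset (dil b {0..M}) {0..N}"
    then obtain J T where JT: "J \<in> {0..M}" "T \<in> {0..N}" "x = b*J+T"
      unfolding sumset_dil_eq by force
    have "b*J \<le> b*M" using JT assms by (intro mult_left_mono) auto
    moreover have "0 \<le> b*J" using JT assms by simp
    ultimately show "x \<in> {0..b*M+N}" using JT by auto
  qed
next
  show "{0..b*M+N} \<subseteq> sumset (dil b {0..M}) {0..N}"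
  proof
    fix x assume x: "x \<in> {0..b*M+N}"
    define J where "J = min (x div b) M"
    have J: "J \<in> {0..M}" using x assms by (auto simp: J_def pos_imp_zdiv_nonneg_iff)
    have T: "x - b*J \<in> {0..N}"
    proof (cases "x div b \<le> M")
      case True
      then have "x - b*J = x mod b" by (simp add: J_def minus_div_mult_eq_mod[symmetric] mult.commute)
      moreover have "x mod b < b" "0 \<le> x mod b" using assms by simp_all
      ultimately have "0 \<le> x - b*J" "x - b*J \<le> N" using assms by linarith+
      then show ?thesis by simp
    next
      case False
      then have "J = M" by (simp add: J_def)
      moreover have "b*(M+1) \<le> x"
      proof -
        have "M + 1 \<le> x div b" using False by simp
        then have "b*(M+1) \<le> b*(x div b)" using assms by (intro mult_left_mono) auto
        also have "\<dots> \<le> x" using assms by (simp add: mult.commute pos_mod_sign minus_mod_eq_mult_div[symmetric])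
        finally show ?thesis .
      qed
      ultimately show ?thesis using x assms by (auto simp: algebra_simps)
    qed
    have "x = (\<lambda>(j,t). b*j+t) (J, x - b*J)" by simp
    moreover have "(J, x - b*J) \<in> {0..M} \<times> {0..N}" using J T by blast
    ultimately show "x \<in> sumset (dil b {0..M}) {0..N}"
      unfolding sumset_dil_eq by (rule image_eqI)
  qed
qed

theorem mainTheorem2:
  fixes k a b l :: int
  assumes "k > 0" "a > 0" "b > 0" "l > 0" "k = a * l" "a \<le> b"
  defines "P \<equiv> dil b {0..l - 1}"
  defines "A \<equiv> sumset P {0..a - 1}"
  shows "int (card A) = k \<and>
    (\<forall>h::nat. h > 0 \<longrightarrow>
      (let Q = dil b {0..int h * (l - 1)} in
        hfold h A = sumset Q {0..int h * (a - 1)} \<and>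
        (a \<le> b \<and> b \<le> (a - 1) * int h + 1 \<longrightarrow>
           int (card (hfold h A)) = (a + b * (l - 1) - 1) * int h + 1) \<and>
        (b \<ge> int h * (a - 1) + 1 \<longrightarrow>
           int (card (hfold h A)) = (a - 1) * (l - 1) * int h ^ 2 + (a + l - 2) * int h + 1)))"
proof -
  have c0: "int (card A) = (l-1+1)*(a-1+1)"
    unfolding A_def P_def by (rule card_S) (use assms(2,4,6) in auto)
  have c1: "int (card A) = k" using c0 assms(5) by (simp add: mult.commute)
  have rest: "hfold h A = sumset (dil b {0..int h * (l - 1)}) {0..int h * (a - 1)} \<and>
        (a \<le> b \<and> b \<le> (a - 1) * int h + 1 \<longrightarrow>
           int (card (hfold h A)) = (a + b * (l - 1) - 1) * int h + 1) \<and>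
        (b \<ge> int h * (a - 1) + 1 \<longrightarrow>
           int (card (hfold h A)) = (a - 1) * (l - 1) * int h ^ 2 + (a + l - 2) * int h + 1)" for h
  proof -
    have eq: "hfold h A = sumset (dil b {0..int h * (l - 1)}) {0..int h * (a - 1)}"
      unfolding A_def P_def by (rule hfold_eq) (use assms(2,4) in auto)
    have nn: "0 \<le> int h * (l - 1)" "0 \<le> int h * (a - 1)" using assms(2,4) by simp_all
    have i1: "a \<le> b \<and> b \<le> (a - 1) * int h + 1 \<longrightarrow>
           int (card (hfold h A)) = (a + b * (l - 1) - 1) * int h + 1"
    proof
      assume H: "a \<le> b \<and> b \<le> (a - 1) * int h + 1"
      have "hfold h A = {0..b * (int h * (l - 1)) + int h * (a - 1)}"
        unfolding eq proof (rule interval_case)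
        show "0 \<le> int h * (l - 1)" "0 \<le> int h * (a - 1)" by (fact nn)+
        show "0 < b" by (fact assms(3))
        show "b \<le> int h * (a - 1) + 1" using H by (simp add: mult.commute)
      qed
      moreover have "0 \<le> b * (int h * (l - 1))" using nn assms(3) by simp
      moreover have "b * (int h * (l - 1)) + int h * (a - 1) + 1 = (a + b * (l - 1) - 1) * int h + 1"
        by (simp add: algebra_simps)
      ultimately show "int (card (hfold h A)) = (a + b * (l - 1) - 1) * int h + 1"
        using nn by simp
    qed
    have i2: "b \<ge> int h * (a - 1) + 1 \<longrightarrow>
           int (card (hfold h A)) = (a - 1) * (l - 1) * int h ^ 2 + (a + l - 2) * int h + 1"
    proof
      assume "b \<ge> int h * (a - 1) + 1"
      then have "int (card (hfold h A)) = (int h * (l - 1) + 1) * (int h * (a - 1) + 1)"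
        unfolding eq by (intro card_S nn) simp
      moreover have "(int h * (l - 1) + 1) * (int h * (a - 1) + 1) = (a - 1) * (l - 1) * int h ^ 2 + (a + l - 2) * int h + 1"
        by (simp add: algebra_simps power2_eq_square)
      ultimately show "int (card (hfold h A)) = (a - 1) * (l - 1) * int h ^ 2 + (a + l - 2) * int h + 1"
        by simp
    qed
    show ?thesis using eq i1 i2 by blast
  qed
  show ?thesis unfolding Let_def using c1 rest by blast
qed

end
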